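(* Let $\mathcal S=[M]\times[N]$, and for each $\mathbf i=(i_1,i_2)\in\mathcal S$ let $\mathcal J_{\mathbf i}\subset\mathcal S$ and $\mathbf M_{\mathbf i}\in\mathbb R^{M\times N}$ with support contained in $\mathcal J_{\mathbf i}$. Let $\mathbf M=\sum_{\mathbf i\in\mathcal S}(\mathbf e_{i_2}\otimes\mathbf e_{i_1})\mathrm{vec}(\mathbf M_{\mathbf i})^\top\in\mathbb R^{MN\times MN}$. Then for every positive integer $p$ and every $\mathbf i=(i_1,i_2)\in\mathcal S$, $$\|(\mathbf e_{i_2}\otimes\mathbf e_{i_1})^\top\mathbf M^p\|_{\ell_0}\le\min\{J_\square\,p^2,\ MN\},$$ where $\|\cdot\|_{\ell_0}$ denotes the number of nonzero entries.
   Context: $\mathrm{vec}$ denotes column-major vectorization; $\mathbf e_{i_1}\in\mathbb R^M$, $\mathbf e_{i_2}\in\mathbb R^N$ are standard basis vectors. $J_\square=\min\{(2k_1+1)(2k_2+1): k_1,k_2\ge0 \text{ integers such that } \mathcal J_{\mathbf i}\subset\{i_1-k_1,\dots,i_1+k_1\}\times\{i_2-k_2,\dots,i_2+k_2\}\ \text{for all } \mathbf i=(i_1,i_2)\in\mathcal S\}$, i.e. the size of the smallest rectangle shape that, centered at each site, contains that site's neighborhood. *)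

theory Defs
  imports "Jordan_Normal_Form.Matrix"
begin

text \<open>Sites are 0-based: S = {0..<M} x {0..<N}.\<close>

definition sites :: "nat \<Rightarrow> nat \<Rightarrow> (nat \<times> nat) set" where
  "sites M N = {0..<M} \<times> {0..<N}"

text \<open>Column-major vectorization of a matrix.\<close>
definition vecm :: "'a mat \<Rightarrow> 'a vec" where
  "vecm A = vec (dim_row A * dim_col A) (\<lambda>k. A $$ (k mod dim_row A, k div dim_row A))"

definition kron_vec :: "'a :: times vec \<Rightarrow> 'a vec \<Rightarrow> 'a vec" where
  "kron_vec u v = vec (dim_vec u * dim_vec v) (\<lambda>k. u $ (k div dim_vec v) * v $ (k mod dim_vec v))"

definition site_vec :: "nat \<Rightarrow> nat \<Rightarrow> nat \<times> nat \<Rightarrow> real vec" where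
  "site_vec M N i = kron_vec (unit_vec N (snd i)) (unit_vec M (fst i))"

definition big_mat :: "nat \<Rightarrow> nat \<Rightarrow> (nat \<times> nat \<Rightarrow> real mat) \<Rightarrow> real mat" where
  "big_mat M N Ms = mat (M * N) (M * N)
     (\<lambda>(r, c). \<Sum>i\<in>sites M N. (site_vec M N i) $ r * (vecm (Ms i)) $ c)"

definition l0 :: "'a :: zero vec \<Rightarrow> nat" where
  "l0 v = card {k. k < dim_vec v \<and> v $ k \<noteq> 0}"

text \<open>J_square: size of the smallest centred rectangle containing every neighbourhood.\<close>
definition J_square :: "nat \<Rightarrow> nat \<Rightarrow> (nat \<times> nat \<Rightarrow> (nat \<times> nat) set) \<Rightarrow> nat" where
  "J_square M N J = (LEAST c. \<exists>k1 k2 :: nat. c = (2 * k1 + 1) * (2 * k2 + 1) \<and>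
     (\<forall>i\<in>sites M N. (\<lambda>(a, b). (int a, int b)) ` J i \<subseteq>
        {int (fst i) - int k1 .. int (fst i) + int k1} \<times> {int (snd i) - int k2 .. int (snd i) + int k2}))"

end

theory Submission
  imports Defs
begin

definition close :: "nat \<Rightarrow> nat \<Rightarrow> nat \<Rightarrow> nat \<Rightarrow> nat \<Rightarrow> bool" where
  "close M k1 k2 r c \<longleftrightarrow> \<bar>int (r mod M) - int (c mod M)\<bar> \<le> int k1 \<and> \<bar>int (r div M) - int (c div M)\<bar> \<le> int k2"

lemma pow_close:
  assumes A: "A \<in> carrier_mat n n"
    and H: "\<And>r c. r < n \<Longrightarrow> c < n \<Longrightarrow> A $$ (r,c) \<noteq> 0 \<Longrightarrow> close M k1 k2 r c"
  shows "r < n \<Longrightarrow> c < n \<Longrightarrow> (A ^\<^sub>m p) $$ (r,c) \<noteq> (0::'a::semiring_1) \<Longrightarrow> close M (p*k1) (p*k2) r c"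
proof (induction p arbitrary: c)
  case 0
  then show ?case using A by (auto simp: close_def split: if_splits)
next
  case (Suc p)
  have "(A ^\<^sub>m Suc p) $$ (r,c) = (\<Sum>l\<in>{0..<n}. (A ^\<^sub>m p) $$ (r,l) * A $$ (l,c))"
    using A Suc.prems by (simp add: scalar_prod_def)
  with Suc.prems obtain l where l: "l < n" "(A ^\<^sub>m p) $$ (r,l) \<noteq> 0" "A $$ (l,c) \<noteq> 0"
    by (metis (no_types, lifting) atLeastLessThan_iff mult_not_zero sum.neutral)
  have c1: "close M (p*k1) (p*k2) r l" using Suc.IH[OF Suc.prems(1) l(1) l(2)] .
  have c2: "close M k1 k2 l c" using H[OF l(1) Suc.prems(2) l(3)] .
  show ?case using c1 c2 unfolding close_def by auto
qed

lemma big_entry: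
  assumes Ms_dim: "\<forall>j\<in>sites M N. Ms j \<in> carrier_mat M N"
    and r: "r < M*N" and c: "c < M*N"
  shows "big_mat M N Ms $$ (r,c) = Ms (r mod M, r div M) $$ (c mod M, c div M)"
proof -
  have M0: "M > 0" using r by (cases M) auto
  have rd: "r div M < N" using r by (simp add: less_mult_imp_div_less mult.commute)
  let ?j0 = "(r mod M, r div M)"
  have j0: "?j0 \<in> sites M N" using M0 rd by (simp add: sites_def)
  have sv: "site_vec M N j $ r = (if j = ?j0 then 1 else 0)" if "j \<in> sites M N" for j
  proof -
    have "r < N * M" using r by (simp add: mult.commute)
    moreover have "r mod M < M" using M0 by simp
    ultimately show ?thesis using that rd unfolding site_vec_def kron_vec_def sites_def
      by (auto simp: prod_eq_iff)
  qed
  have "big_mat M N Ms $$ (r,c) = (\<Sum>j\<in>sites M N. site_vec M N j $ r * vecm (Ms j) $ c)"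
    using r c by (simp add: big_mat_def)
  also have "\<dots> = (\<Sum>j\<in>sites M N. if j = ?j0 then vecm (Ms j) $ c else 0)"
    by (rule sum.cong) (auto simp: sv)
  also have "\<dots> = vecm (Ms ?j0) $ c"
    using j0 by (simp add: sites_def)
  also have "\<dots> = Ms ?j0 $$ (c mod M, c div M)"
    using Ms_dim j0 c unfolding vecm_def by auto
  finally show ?thesis .
qed


lemma cint: "card {int a - int b .. int a + int b} = 2*b+1"
  by simp

theorem lemma4:
  fixes M N :: nat
    and J :: "nat \<times> nat \<Rightarrow> (nat \<times> nat) set"
    and Ms :: "nat \<times> nat \<Rightarrow> real mat"
    and p :: nat and i :: "nat \<times> nat"
  assumes J_sub: "\<forall>j\<in>sites M N. J j \<subseteq> sites M N"
    and Ms_dim: "\<forall>j\<in>sites M N. Ms j \<in> carrier_mat M N"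
    and Ms_supp: "\<forall>j\<in>sites M N. \<forall>a<M. \<forall>b<N. Ms j $$ (a, b) \<noteq> 0 \<longrightarrow> (a, b) \<in> J j"
    and p_pos: "p \<ge> 1"
    and i_in: "i \<in> sites M N"
  shows "l0 (transpose_mat (big_mat M N Ms ^\<^sub>m p) *\<^sub>v site_vec M N i)
           \<le> min (J_square M N J * p ^ 2) (M * N)"
proof -
  define P where "P c \<longleftrightarrow> (\<exists>k1 k2 :: nat. c = (2 * k1 + 1) * (2 * k2 + 1) \<and>
     (\<forall>i\<in>sites M N. (\<lambda>(a, b). (int a, int b)) ` J i \<subseteq>
        {int (fst i) - int k1 .. int (fst i) + int k1} \<times> {int (snd i) - int k2 .. int (snd i) + int k2}))" for c
  have JP: "J_square M N J = (LEAST c. P c)" unfolding J_square_def P_def by simp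
  have "P ((2 * M + 1) * (2 * N + 1))"
    unfolding P_def
  proof (intro exI conjI refl ballI)
    fix j assume j: "j \<in> sites M N"
    show "(\<lambda>(a, b). (int a, int b)) ` J j \<subseteq>
        {int (fst j) - int M .. int (fst j) + int M} \<times> {int (snd j) - int N .. int (snd j) + int N}"
      using J_sub j by (fastforce simp: sites_def)
  qed simp
  then have "P (J_square M N J)" unfolding JP by (rule LeastI)
  then obtain k1 k2 where Jsq: "J_square M N J = (2 * k1 + 1) * (2 * k2 + 1)"
    and box: "\<And>j. j \<in> sites M N \<Longrightarrow> (\<lambda>(a, b). (int a, int b)) ` J j \<subseteq>
        {int (fst j) - int k1 .. int (fst j) + int k1} \<times> {int (snd j) - int k2 .. int (snd j) + int k2}"
    unfolding P_def by blast
  obtain i1 i2 where i: "i = (i1, i2)" by (cases i)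
  have i1: "i1 < M" and i2: "i2 < N" using i_in i by (auto simp: sites_def)
  have M0: "M > 0" using i1 by simp
  define n where "n = M * N"
  define B where "B = big_mat M N Ms"
  have Bc: "B \<in> carrier_mat n n" by (simp add: B_def big_mat_def n_def)
  have H: "close M k1 k2 r c" if r: "r < n" and c: "c < n" and nz: "B $$ (r,c) \<noteq> 0" for r c
  proof -
    have rd: "r div M < N" using r by (simp add: n_def less_mult_imp_div_less mult.commute)
    have cd: "c div M < N" using c by (simp add: n_def less_mult_imp_div_less mult.commute)
    have j0: "(r mod M, r div M) \<in> sites M N" using M0 rd by (simp add: sites_def)
    have "Ms (r mod M, r div M) $$ (c mod M, c div M) \<noteq> 0"
      using nz big_entry[OF Ms_dim, of r c] r c by (simp add: B_def n_def)
    then have "(c mod M, c div M) \<in> J (r mod M, r div M)"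
      using Ms_supp j0 M0 cd by auto
    then have "(int (c mod M), int (c div M)) \<in> {int (r mod M) - int k1 .. int (r mod M) + int k1} \<times> {int (r div M) - int k2 .. int (r div M) + int k2}"
      using box[OF j0] by force
    then show ?thesis unfolding close_def by auto
  qed
  define r0 where "r0 = i1 + i2 * M"
  have r0n: "r0 < n" unfolding r0_def n_def
  proof -
    have "i1 + i2 * M < M + i2 * M" using i1 by simp
    also have "\<dots> = (i2 + 1) * M" by simp
    also have "\<dots> \<le> N * M" using i2 by (intro mult_right_mono) auto
    finally show "i1 + i2 * M < M * N" by (simp add: mult.commute)
  qed
  have r0m: "r0 mod M = i1" "r0 div M = i2" using i1 by (auto simp: r0_def)
  have sv: "site_vec M N i $ l = (if l = r0 then 1 else 0)" if l: "l < n" for l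
  proof -
    have ld: "l div M < N" using l by (simp add: n_def less_mult_imp_div_less mult.commute)
    have "l < N * M" using l by (simp add: n_def mult.commute)
    then have "site_vec M N i $ l = (if l div M = i2 then 1 else 0) * (if l mod M = i1 then 1 else 0)"
      using ld M0 i1 i2 unfolding site_vec_def kron_vec_def i by simp
    also have "\<dots> = (if l = r0 then 1 else 0)"
      using r0m by (auto simp: r0_def)
    finally show ?thesis .
  qed
  have dsv: "dim_vec (site_vec M N i) = n" by (simp add: site_vec_def kron_vec_def n_def mult.commute)
  define v where "v = transpose_mat (B ^\<^sub>m p) *\<^sub>v site_vec M N i"
  have dv: "dim_vec v = n" using Bc by (simp add: v_def)
  have ve: "v $ k = (B ^\<^sub>m p) $$ (r0, k)" if k: "k < n" for k
  proof -
    have "v $ k = (\<Sum>l\<in>{0..<n}. (B ^\<^sub>m p) $$ (l, k) * site_vec M N i $ l)"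
      using k Bc dsv by (simp add: v_def scalar_prod_def)
    also have "\<dots> = (\<Sum>l\<in>{0..<n}. if l = r0 then (B ^\<^sub>m p) $$ (l, k) else 0)"
      by (rule sum.cong) (auto simp: sv)
    also have "\<dots> = (B ^\<^sub>m p) $$ (r0, k)" using r0n by simp
    finally show ?thesis .
  qed
  let ?S = "{k. k < dim_vec v \<and> v $ k \<noteq> 0}"
  have S1: "?S \<subseteq> {0..<n}" using dv by auto
  have c1: "card ?S \<le> M * N" using card_mono[OF _ S1] by (simp add: n_def)
  define f where "f k = (int (k mod M), int (k div M))" for k
  have inj: "inj_on f ?S"
  proof
    fix x y assume "f x = f y"
    then have "x mod M = y mod M" "x div M = y div M" by (auto simp: f_def)
    then show "x = y" by (metis div_mult_mod_eq)
  qed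
  have img: "f ` ?S \<subseteq> {int i1 - int (p*k1) .. int i1 + int (p*k1)} \<times> {int i2 - int (p*k2) .. int i2 + int (p*k2)}"
  proof
    fix y assume "y \<in> f ` ?S"
    then obtain k where k: "k < n" "v $ k \<noteq> 0" and y: "y = f k" using dv by auto
    have "close M (p*k1) (p*k2) r0 k"
      using pow_close[OF Bc H r0n k(1)] k ve by auto
    then show "y \<in> {int i1 - int (p*k1) .. int i1 + int (p*k1)} \<times> {int i2 - int (p*k2) .. int i2 + int (p*k2)}"
      unfolding close_def y f_def r0m by auto
  qed
  have "card ?S = card (f ` ?S)" using card_image[OF inj] by simp
  also have "\<dots> \<le> card ({int i1 - int (p*k1) .. int i1 + int (p*k1)} \<times> {int i2 - int (p*k2) .. int i2 + int (p*k2)})"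
    by (rule card_mono[OF _ img]) simp
  also have "\<dots> = (2*(p*k1)+1) * (2*(p*k2)+1)"
    by (simp only: card_cartesian_product cint)
  also have "\<dots> \<le> (p*(2*k1+1)) * (p*(2*k2+1))"
    using p_pos by (intro mult_le_mono) (simp_all add: algebra_simps)
  also have "\<dots> = J_square M N J * p ^ 2" by (simp add: Jsq power2_eq_square algebra_simps)
  finally have c2: "card ?S \<le> J_square M N J * p ^ 2" .
  show ?thesis using c1 c2 unfolding l0_def v_def B_def by simp
qed

end
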